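(* Let $G=K_{r_1,\dots,r_k}$ be a complete multipartite graph with $|V(G)|=r_1+\cdots+r_k$ even. Then $G$ has a good bisection.
   Context: A bisection of a graph $G$ is a bipartite spanning subgraph $H$ of $G$ with a bipartition into two partition sets (every edge of $H$ joining the two sets) whose sizes differ by at most one. A bisection $H$ of $G$ is good if $2d_H(v)\ge d_G(v)-1$ for every $v\in V(G)$. *)

theory Defs
  imports Main
begin

text \<open>A (simple) graph is given by a finite vertex set V and a symmetric, irreflexive
adjacency relation E; only edges between vertices of V are relevant.\<close>

definition degree :: "'a set \<Rightarrow> ('a \<Rightarrow> 'a \<Rightarrow> bool) \<Rightarrow> 'a \<Rightarrow> nat" where
  "degree V E v = card {u \<in> V. E v u}"

definition is_bisection :: "'a set \<Rightarrow> ('a \<Rightarrow> 'a \<Rightarrow> bool) \<Rightarrow> ('a \<Rightarrow> 'a \<Rightarrow> bool) \<Rightarrow> bool" where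
  "is_bisection V E H \<longleftrightarrow>
     (\<forall>u v. H u v \<longrightarrow> u \<in> V \<and> v \<in> V \<and> E u v) \<and>
     (\<forall>u v. H u v \<longleftrightarrow> H v u) \<and>
     (\<exists>A B. A \<union> B = V \<and> A \<inter> B = {} \<and> card A \<le> card B + 1 \<and> card B \<le> card A + 1 \<and>
        (\<forall>u v. H u v \<longrightarrow> (u \<in> A \<and> v \<in> B) \<or> (u \<in> B \<and> v \<in> A)))"

definition good_bisection :: "'a set \<Rightarrow> ('a \<Rightarrow> 'a \<Rightarrow> bool) \<Rightarrow> ('a \<Rightarrow> 'a \<Rightarrow> bool) \<Rightarrow> bool" where
  "good_bisection V E H \<longleftrightarrow> is_bisection V E H \<and>
     (\<forall>v \<in> V. 2 * int (degree V H v) \<ge> int (degree V E v) - 1)"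

text \<open>The complete multipartite graph K_{r_1,...,r_k} for rs = [r_1,...,r_k]:
vertices are pairs (i,j) with i < k and j < r_i (part i has r_i vertices);
two vertices are adjacent iff they lie in different parts.\<close>

definition cmp_vertices :: "nat list \<Rightarrow> (nat \<times> nat) set" where
  "cmp_vertices rs = {(i, j). i < length rs \<and> j < rs ! i}"

definition cmp_adj :: "nat \<times> nat \<Rightarrow> nat \<times> nat \<Rightarrow> bool" where
  "cmp_adj u v \<longleftrightarrow> fst u \<noteq> fst v"

end

theory Submission
  imports Defs
begin

lemma cnt_even: "card {j. j < r \<and> even (c + j)} = (if even c then (r+1) div 2 else r div 2)"
proof (induction r)
  case 0 then show ?case by simp
next
  case (Suc r)
  have e: "{j. j < Suc r \<and> even (c + j)} = {j. j < r \<and> even (c + j)} \<union> (if even (c + r) then {r} else {})"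
    by (auto simp: less_Suc_eq)
  have f: "finite {j. j < r \<and> even (c + j)}" by simp
  show ?case unfolding e using Suc f by (auto simp: card_insert_if)
qed

lemma cnt_bound: "2 * card {j. j < r \<and> even (c + j)} \<le> r + 1"
  unfolding cnt_even by presburger

lemma cnt_bound_odd: "2 * card {j. j < r \<and> odd (c + j)} \<le> r + 1"
proof -
  have "{j. j < r \<and> odd (c + j)} = {j. j < r \<and> even (Suc c + j)}" by auto
  then show ?thesis using cnt_bound[of r "Suc c"] by simp
qed

lemma cnt_odd: "card {j. j < r \<and> odd (c + j)} = (if even c then r div 2 else (r+1) div 2)"
proof -
  have "{j. j < r \<and> odd (c + j)} = {j. j < r \<and> even (Suc c + j)}" by auto
  then show ?thesis using cnt_even[of r "Suc c"] by simp
qed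

theorem mainTheorem5:
  fixes rs :: "nat list"
  assumes "even (sum_list rs)"
  shows "\<exists>H. good_bisection (cmp_vertices rs) cmp_adj H"
proof -
  define V where "V = cmp_vertices rs"
  define n where "n = sum_list rs"
  define s where "s i = (\<Sum>l<i. rs!l)" for i
  define g where "g v = s (fst v) + snd v" for v :: "nat \<times> nat"
  define P where "P i = {i} \<times> {..<rs!i}" for i
  define A where "A = {v \<in> V. even (g v)}"
  define B where "B = {v \<in> V. odd (g v)}"
  define H where "H u v \<longleftrightarrow> u \<in> V \<and> v \<in> V \<and> fst u \<noteq> fst v \<and> (even (g u) \<noteq> even (g v))" for u v
  have VU: "V = (\<Union>i<length rs. P i)"
    unfolding V_def cmp_vertices_def P_def by auto
  have finV: "finite V" unfolding VU P_def by auto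
  have cardV: "card V = n"
  proof -
    have "card V = (\<Sum>i<length rs. card (P i))"
      unfolding VU by (rule card_UN_disjoint) (auto simp: P_def)
    also have "\<dots> = (\<Sum>i<length rs. rs!i)" by (simp add: P_def)
    also have "\<dots> = n" unfolding n_def by (simp add: sum_list_sum_nth atLeast0LessThan)
    finally show ?thesis .
  qed
  have sSuc: "s (Suc i) = s i + rs!i" for i by (simp add: s_def)
  have smono: "i \<le> i' \<Longrightarrow> s i \<le> s i'" for i i'
    unfolding s_def by (rule sum_mono2) auto
  have sn: "s (length rs) = n" unfolding s_def n_def by (simp add: sum_list_sum_nth atLeast0LessThan)
  have gbound: "v \<in> V \<Longrightarrow> g v < s (Suc (fst v))" for v
    using sSuc unfolding V_def cmp_vertices_def g_def by auto
  have injg: "inj_on g V"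
  proof (rule inj_onI)
    fix u v assume u: "u \<in> V" and v: "v \<in> V" and e: "g u = g v"
    have "\<not> fst x < fst y" if x: "x \<in> V" and y: "y \<in> V" and e: "g x = g y" for x y :: "nat \<times> nat"
    proof
      assume "fst x < fst y"
      then have "s (Suc (fst x)) \<le> s (fst y)" by (intro smono) auto
      then show False using gbound[OF x] e unfolding g_def by auto
    qed
    from this[OF u v e] this[OF v u e[symmetric]] have "fst u = fst v" by auto
    with e show "u = v" unfolding g_def by (simp add: prod_eq_iff)
  qed
  have gV: "g ` V = {..<n}"
  proof (rule card_subset_eq)
    show "finite {..<n}" by simp
    show "g ` V \<subseteq> {..<n}"
    proof
      fix k assume "k \<in> g ` V"
      then obtain v where v: "v \<in> V" "k = g v" by auto
      have "fst v < length rs" using v unfolding V_def cmp_vertices_def by auto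
      then have "s (Suc (fst v)) \<le> n" using smono[of "Suc (fst v)" "length rs"] sn by auto
      then show "k \<in> {..<n}" using gbound[OF v(1)] v by auto
    qed
    show "card (g ` V) = card {..<n}" using card_image[OF injg] cardV by simp
  qed
  have gA: "g ` A = {k. k < n \<and> even (0 + k)}" unfolding A_def using gV by auto
  have gB: "g ` B = {k. k < n \<and> odd (0 + k)}" unfolding B_def using gV by auto
  have cA: "card A = n div 2"
    using card_image[OF inj_on_subset[OF injg], of A] gA cnt_even[of n 0] assms n_def
    unfolding A_def by auto
  have cB: "card B = n div 2"
    using card_image[OF inj_on_subset[OF injg], of B] gB cnt_odd[of n 0] unfolding B_def by auto
  have AB: "A \<union> B = V" "A \<inter> B = {}" unfolding A_def B_def by auto
  have PV: "i < length rs \<Longrightarrow> P i \<subseteq> V" for i unfolding V_def cmp_vertices_def P_def by auto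
  have finP: "finite (P i)" for i unfolding P_def by auto
  have degE: "degree V cmp_adj v = n - rs ! (fst v)" if v: "v \<in> V" for v
  proof -
    have i: "fst v < length rs" using v unfolding V_def cmp_vertices_def by auto
    have "{u \<in> V. cmp_adj v u} = V - P (fst v)" unfolding cmp_adj_def P_def V_def cmp_vertices_def by auto
    then show ?thesis unfolding degree_def using card_Diff_subset[OF finP PV[OF i]] cardV
      by (simp add: P_def)
  qed
  have cnt: "card (X \<inter> P i) = card {j. j < rs!i \<and> Q (s i + j)}"
    if "X = {v \<in> V. Q (g v)}" "i < length rs" for X Q i
  proof -
    have "X \<inter> P i = Pair i ` {j. j < rs!i \<and> Q (s i + j)}"
      using that unfolding P_def V_def cmp_vertices_def g_def by auto
    then show ?thesis by (simp add: card_image inj_on_def)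
  qed
  have degH: "degree V H v = card Y - card (Y \<inter> P (fst v))"
    if v: "v \<in> V" and Y: "Y = {u \<in> V. even (g u) \<noteq> even (g v)}" for v Y
  proof -
    have "{u \<in> V. H v u} = Y - P (fst v)" using v unfolding Y H_def P_def V_def cmp_vertices_def by auto
    moreover have "finite Y" using finV Y by auto
    ultimately show ?thesis unfolding degree_def by (simp add: card_Diff_subset_Int finP)
  qed
  have "good_bisection V cmp_adj H"
    unfolding good_bisection_def is_bisection_def
  proof (intro conjI ballI)
    show "\<forall>u v. H u v \<longrightarrow> u \<in> V \<and> v \<in> V \<and> cmp_adj u v" unfolding H_def cmp_adj_def by auto
    show "\<forall>u v. H u v = H v u" unfolding H_def by auto
    show "\<exists>A B. A \<union> B = V \<and> A \<inter> B = {} \<and> card A \<le> card B + 1 \<and> card B \<le> card A + 1 \<and>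
        (\<forall>u v. H u v \<longrightarrow> u \<in> A \<and> v \<in> B \<or> u \<in> B \<and> v \<in> A)"
      by (rule exI[of _ A], rule exI[of _ B]) (use AB cA cB in \<open>auto simp: H_def A_def B_def\<close>)
  next
    fix v assume v: "v \<in> V"
    have i: "fst v < length rs" using v unfolding V_def cmp_vertices_def by auto
    define Y where "Y = {u \<in> V. even (g u) \<noteq> even (g v)}"
    have cY: "card Y = n div 2" using cA cB unfolding Y_def A_def B_def by (cases "even (g v)") auto
    have b: "2 * card (Y \<inter> P (fst v)) \<le> rs ! fst v + 1"
    proof (cases "even (g v)")
      case True
      then have "Y = {u \<in> V. odd (g u)}" unfolding Y_def by auto
      from cnt[OF this i] show ?thesis using cnt_bound_odd by simp
    next
      case False
      then have "Y = {u \<in> V. even (g u)}" unfolding Y_def by auto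
      from cnt[OF this i] show ?thesis using cnt_bound by simp
    qed
    have le: "card (Y \<inter> P (fst v)) \<le> card Y" using finV unfolding Y_def by (intro card_mono) auto
    have "rs ! fst v \<le> n" using card_mono[OF finV PV[OF i]] cardV by (simp add: P_def)
    then show "int (degree V cmp_adj v) - 1 \<le> 2 * int (degree V H v)"
      using degE[OF v] degH[OF v Y_def] cY b le assms n_def by (auto simp: of_nat_diff)
  qed
  then show ?thesis unfolding V_def by blast
qed

end
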